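(* For every integer $m\geq 3$, the graph $C_m[4]$ has a $C_m$-factorization, i.e. its edge set can be partitioned into $C_m$-factors.
   Context: For a graph $G$ and a positive integer $k$, $G[k]$ is the graph with vertex set $V(G)\times\{0,1,\dots,k-1\}$ in which $(u,i)$ and $(w,j)$ are adjacent if and only if $uw\in E(G)$. $C_m$ is the cycle of length $m$. A $C_k$-factor of a graph is a spanning subgraph each of whose components is a cycle of length $k$; a $C_k$-factorization is a partition of the edge set into $C_k$-factors. *)

theory Defs
  imports Main
begin

definition cycle_verts :: "nat \<Rightarrow> nat set" where
  "cycle_verts m = {0..<m}"

definition cycle_edges :: "nat \<Rightarrow> nat set set" where
  "cycle_edges m = {{i, (i + 1) mod m} | i. i < m}"

definition lex_verts :: "'a set \<Rightarrow> nat \<Rightarrow> ('a \<times> nat) set" where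
  "lex_verts V k = V \<times> {0..<k}"

definition lex_edges :: "'a set set \<Rightarrow> nat \<Rightarrow> ('a \<times> nat) set set" where
  "lex_edges E k = {{(u, i), (w, j)} | u w i j. {u, w} \<in> E \<and> i < k \<and> j < k}"

definition cyc_of_list :: "'a list \<Rightarrow> 'a set set" where
  "cyc_of_list vs = {{vs ! i, vs ! ((i + 1) mod length vs)} | i. i < length vs}"

definition is_Ck_factor :: "nat \<Rightarrow> 'a set \<Rightarrow> 'a set set \<Rightarrow> 'a set set \<Rightarrow> bool" where
  "is_Ck_factor m V E F \<longleftrightarrow> F \<subseteq> E \<and>
     (\<exists>Cs :: 'a list set.
        (\<forall>vs\<in>Cs. distinct vs \<and> length vs = m \<and> set vs \<subseteq> V) \<and>
        (\<forall>vs\<in>Cs. \<forall>ws\<in>Cs. set vs \<inter> set ws \<noteq> {} \<longrightarrow> set vs = set ws \<and> cyc_of_list vs = cyc_of_list ws) \<and>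
        (\<Union>vs\<in>Cs. set vs) = V \<and>
        F = (\<Union>vs\<in>Cs. cyc_of_list vs))"

definition has_Ck_factorization :: "nat \<Rightarrow> 'a set \<Rightarrow> 'a set set \<Rightarrow> bool" where
  "has_Ck_factorization m V E \<longleftrightarrow>
     (\<exists>\<F> :: 'a set set set.
        (\<forall>F\<in>\<F>. is_Ck_factor m V E F) \<and>
        (\<forall>F\<in>\<F>. \<forall>F'\<in>\<F>. F \<noteq> F' \<longrightarrow> F \<inter> F' = {}) \<and>
        \<Union>\<F> = E)"

end

theory Submission
  imports Defs
begin

unbundle bit_operations_syntax

definition phi :: "nat \<Rightarrow> nat" where
  "phi f = (if f = 1 then 2 else if f = 2 then 3 else if f = 3 then 1 else 0)"

definition off :: "nat \<Rightarrow> nat \<Rightarrow> nat \<Rightarrow> nat" where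
  "off m f i = (if i = m - 1 then (if even m then f else phi f) else if odd i then f else 0)"

definition lv :: "nat \<Rightarrow> nat \<Rightarrow> nat \<Rightarrow> nat \<Rightarrow> nat" where
  "lv m f j i = j XOR off m f i"

definition cyc :: "nat \<Rightarrow> nat \<Rightarrow> nat \<Rightarrow> (nat \<times> nat) list" where
  "cyc m f j = map (\<lambda>i. (i, lv m f j i)) [0..<m]"

definition edge :: "nat \<Rightarrow> nat \<Rightarrow> nat \<Rightarrow> nat \<Rightarrow> (nat \<times> nat) set" where
  "edge m f j i = {(i, lv m f j i), ((i + 1) mod m, lv m f j ((i + 1) mod m))}"

definition Fac :: "nat \<Rightarrow> nat \<Rightarrow> (nat \<times> nat) set set" where
  "Fac m f = (\<Union>j\<in>{0..<4}. cyc_of_list (cyc m f j))"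

lemma lt4_cases: "(a::nat) < 4 \<Longrightarrow> a = 0 \<or> a = 1 \<or> a = 2 \<or> a = 3"
  by auto

lemma all4: "(\<forall>x<4. P x) \<longleftrightarrow> P 0 \<and> P 1 \<and> P 2 \<and> P (3::nat)"
proof
  assume "P 0 \<and> P 1 \<and> P 2 \<and> P (3::nat)"
  moreover have "x < 4 \<Longrightarrow> x = 0 \<or> x = 1 \<or> x = 2 \<or> x = (3::nat)" for x by auto
  ultimately show "\<forall>x<4. P x" by blast
qed auto
lemma ex4: "(\<exists>x<4. P x) \<longleftrightarrow> P 0 \<or> P 1 \<or> P 2 \<or> P (3::nat)"
  using all4[of "\<lambda>x. \<not> P x"] by auto
lemma xor_lt4: "(a::nat) < 4 \<Longrightarrow> b < 4 \<Longrightarrow> a XOR b < 4"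
proof -
  have "\<forall>a<4. \<forall>b<4. a XOR b < (4::nat)" by (simp add: all4)
  then show "a < 4 \<Longrightarrow> b < 4 \<Longrightarrow> a XOR b < 4" by blast
qed
lemma xor_cancel: "((a::nat) XOR c) XOR c = a"
  by (simp add: xor.assoc)

lemma xor_cancel2: "(a::nat) XOR (a XOR c) = c"
  by (simp flip: xor.assoc)

lemma phi_lt4: "phi f < 4"
  by (simp add: phi_def)

lemma off_lt4: "f < 4 \<Longrightarrow> off m f i < 4"
  by (simp add: off_def phi_lt4)

lemma lv_lt4: "f < 4 \<Longrightarrow> j < 4 \<Longrightarrow> lv m f j i < 4"
  by (simp add: lv_def off_lt4 xor_lt4)

lemma D_lemma:
  assumes "m \<ge> 3" "i < m"
  shows "\<exists>g. (\<forall>f<4. off m f i XOR off m f ((i + 1) mod m) = g f) \<and>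
             (\<forall>x<4. \<forall>y<4. g x = g y \<longrightarrow> x = y) \<and> (\<forall>z<4. \<exists>f<4. g f = z)"
proof -
  have idg: "(\<forall>x<4. \<forall>y<4. (\<lambda>f::nat. f) x = (\<lambda>f. f) y \<longrightarrow> x = y) \<and> (\<forall>z<4. \<exists>f<4. (\<lambda>f::nat. f) f = z)"
    by auto
  have phig: "(\<forall>x<4. \<forall>y<4. phi x = phi y \<longrightarrow> x = y) \<and> (\<forall>z<4. \<exists>f<4. phi f = z)"
    by (simp add: all4 ex4 phi_def)
  have psig: "(\<forall>x<4. \<forall>y<4. (x XOR phi x) = (y XOR phi y) \<longrightarrow> x = y) \<and> (\<forall>z<4. \<exists>f<4. (f XOR phi f) = z)"
    by (simp add: all4 ex4 phi_def)
  consider (a) "i + 1 < m - 1" | (b) "i = m - 2" | (c) "i = m - 1" using assms by linarith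
  then show ?thesis
  proof cases
    case a
    then have e: "(i + 1) mod m = i + 1" by simp
    have "off m f i XOR off m f ((i + 1) mod m) = f" for f
      unfolding e off_def using a by auto
    then show ?thesis using idg by (intro exI[of _ "\<lambda>f::nat. f"]) simp
  next
    case b
    then have e: "(i + 1) mod m = m - 1" using assms by simp
    show ?thesis
    proof (cases "even m")
      case True
      then have "off m f i XOR off m f ((i + 1) mod m) = f" for f
        unfolding e off_def using b assms by auto
      then show ?thesis using idg by (intro exI[of _ "\<lambda>f::nat. f"]) simp
    next
      case False
      then have "off m f i XOR off m f ((i + 1) mod m) = f XOR phi f" for f
        unfolding e off_def using b assms by auto
      then show ?thesis using psig by (intro exI[of _ "\<lambda>f. f XOR phi f"]) simp
    qed
  next
    case c
    then have e: "(i + 1) mod m = 0" using assms by simp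
    show ?thesis
    proof (cases "even m")
      case True
      then have "off m f i XOR off m f ((i + 1) mod m) = f" for f
        unfolding e off_def using c assms by auto
      then show ?thesis using idg by (intro exI[of _ "\<lambda>f::nat. f"]) simp
    next
      case False
      then have "off m f i XOR off m f ((i + 1) mod m) = phi f" for f
        unfolding e off_def using c assms by auto
      then show ?thesis using phig by (intro exI[of _ "phi"]) simp
    qed
  qed
qed

lemma no_swap:
  assumes "(m::nat) \<ge> 3" "i < m" "k < m" "i = (k + 1) mod m" "k = (i + 1) mod m"
  shows False
proof (cases "k + 1 < m")
  case True
  then have ik: "i = k + 1" using assms(4) by simp
  show False
  proof (cases "k + 2 < m")
    case True
    then have "(i + 1) mod m = k + 2" using ik by simp
    then show False using assms(5) by simp
  next
    case False
    then have im: "i + 1 = m" using ik \<open>k + 1 < m\<close> by simp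
    have "k = 0" using assms(5) unfolding im by simp
    then show False using im ik assms(1) by simp
  qed
next
  case False
  then have km: "k + 1 = m" using assms(3) by simp
  then have i0: "i = 0" using assms(4) by simp
  have "k = 1" using assms(5) assms(1) unfolding i0 by simp
  then show False using km assms(1) by simp
qed

lemma edge_eq:
  assumes "m \<ge> 3" "i < m" "k < m" "edge m f j i = edge m g j' k"
  shows "i = k \<and> lv m f j i = lv m g j' i \<and> lv m f j ((i+1) mod m) = lv m g j' ((i+1) mod m)"
proof -
  from assms(4) have
    "((i, lv m f j i) = (k, lv m g j' k) \<and> ((i + 1) mod m, lv m f j ((i + 1) mod m)) = ((k + 1) mod m, lv m g j' ((k + 1) mod m)))
     \<or> ((i, lv m f j i) = ((k + 1) mod m, lv m g j' ((k + 1) mod m)) \<and> ((i + 1) mod m, lv m f j ((i + 1) mod m)) = (k, lv m g j' k))"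
    unfolding edge_def by (simp add: doubleton_eq_iff)
  then show ?thesis using no_swap[OF assms(1,2,3)] by auto
qed

lemma cyc_edges:
  assumes "0 < m" shows "cyc_of_list (cyc m f j) = {edge m f j i | i. i < m}"
proof -
  have len: "length (cyc m f j) = m" by (simp add: cyc_def)
  have nth: "cyc m f j ! i = (i, lv m f j i)" if "i < m" for i using that by (simp add: cyc_def)
  show ?thesis unfolding cyc_of_list_def len
    by (intro Collect_cong ex_cong1) (auto simp: nth edge_def assms)
qed

lemma set_cyc: "set (cyc m f j) = {(i, lv m f j i) | i. i < m}"
  unfolding cyc_def by auto

lemma edge_in_E:
  assumes "m \<ge> 3" "i < m" "f < 4" "j < 4"
  shows "edge m f j i \<in> lex_edges (cycle_edges m) 4"
proof -
  have "{i, (i + 1) mod m} \<in> cycle_edges m" using assms by (auto simp: cycle_edges_def)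
  then show ?thesis unfolding lex_edges_def edge_def
    using lv_lt4[OF assms(3,4)] by blast
qed

lemma cover:
  assumes "m \<ge> 3" "i < m" "a < 4" "b < 4"
  shows "\<exists>f<4. \<exists>j<4. edge m f j i = {(i, a), ((i + 1) mod m, b)}"
proof -
  obtain g where g: "\<forall>f<4. off m f i XOR off m f ((i + 1) mod m) = g f" "\<forall>z<4. \<exists>f<4. g f = z"
    using D_lemma[OF assms(1,2)] by blast
  obtain f where f: "f < 4" "g f = a XOR b" using g(2) xor_lt4[OF assms(3,4)] by blast
  define j where "j = a XOR off m f i"
  have j4: "j < 4" unfolding j_def using f off_lt4 xor_lt4 assms by blast
  have 1: "lv m f j i = a" unfolding lv_def j_def by (rule xor_cancel)
  have "lv m f j ((i + 1) mod m) = a XOR (off m f i XOR off m f ((i + 1) mod m))"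
    unfolding lv_def j_def by (simp add: xor.assoc)
  also have "\<dots> = b" using g(1) f by (simp add: xor_cancel2)
  finally show ?thesis using 1 f j4 unfolding edge_def by auto
qed

lemma disj:
  assumes "m \<ge> 3" "i < m" "k < m" "f < 4" "g < 4" "edge m f j i = edge m g j' k"
  shows "f = g"
proof -
  from edge_eq[OF assms(1,2,3,6)] have
    e: "j XOR off m f i = j' XOR off m g i"
       "j XOR off m f ((i+1) mod m) = j' XOR off m g ((i+1) mod m)"
    by (auto simp: lv_def)
  have "off m f i XOR off m f ((i+1) mod m) = (j XOR off m f i) XOR (j XOR off m f ((i+1) mod m))"
    by (metis xor.assoc xor.left_commute xor_cancel2)
  also have "\<dots> = (j' XOR off m g i) XOR (j' XOR off m g ((i+1) mod m))" using e by simp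
  also have "\<dots> = off m g i XOR off m g ((i+1) mod m)"
    by (metis xor.assoc xor.left_commute xor_cancel2)
  finally have eq: "off m f i XOR off m f ((i+1) mod m) = off m g i XOR off m g ((i+1) mod m)" .
  obtain h where h: "\<forall>f<4. off m f i XOR off m f ((i + 1) mod m) = h f"
     "\<forall>x<4. \<forall>y<4. h x = h y \<longrightarrow> x = y"
    using D_lemma[OF assms(1,2)] by blast
  show ?thesis using h eq assms(4,5) by metis
qed

lemma factor:
  assumes m: "m \<ge> 3" and f: "f < 4"
  shows "is_Ck_factor m (lex_verts (cycle_verts m) 4) (lex_edges (cycle_edges m) 4) (Fac m f)"
proof -
  have m0: "0 < m" using m by simp
  have sub: "Fac m f \<subseteq> lex_edges (cycle_edges m) 4"
    unfolding Fac_def using cyc_edges[OF m0] edge_in_E[OF m _ f] by auto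
  let ?Cs = "cyc m f ` {0..<4}"
  have c1: "\<forall>vs\<in>?Cs. distinct vs \<and> length vs = m \<and> set vs \<subseteq> lex_verts (cycle_verts m) 4"
  proof
    fix vs assume "vs \<in> ?Cs"
    then obtain j where j: "j < 4" "vs = cyc m f j" by auto
    have "distinct vs" unfolding j cyc_def by (simp add: distinct_map inj_on_def)
    moreover have "length vs = m" unfolding j cyc_def by simp
    moreover have "set vs \<subseteq> lex_verts (cycle_verts m) 4"
      unfolding j set_cyc lex_verts_def cycle_verts_def using lv_lt4[OF f j(1)] by auto
    ultimately show "distinct vs \<and> length vs = m \<and> set vs \<subseteq> lex_verts (cycle_verts m) 4" by blast
  qed
  have c2: "\<forall>vs\<in>?Cs. \<forall>ws\<in>?Cs. set vs \<inter> set ws \<noteq> {} \<longrightarrow> set vs = set ws \<and> cyc_of_list vs = cyc_of_list ws"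
  proof (intro ballI impI)
    fix vs ws assume "vs \<in> ?Cs" "ws \<in> ?Cs" "set vs \<inter> set ws \<noteq> {}"
    then obtain j j' where jj: "vs = cyc m f j" "ws = cyc m f j'" by auto
    have "set (cyc m f j) \<inter> set (cyc m f j') \<noteq> {}" using jj \<open>set vs \<inter> set ws \<noteq> {}\<close> by simp
    then obtain i where "lv m f j i = lv m f j' i"
      unfolding set_cyc by auto
    then have "j = j'" unfolding lv_def by (metis xor_cancel)
    then show "set vs = set ws \<and> cyc_of_list vs = cyc_of_list ws" using jj by simp
  qed
  have c3: "(\<Union>vs\<in>?Cs. set vs) = lex_verts (cycle_verts m) 4"
  proof
    show "(\<Union>vs\<in>?Cs. set vs) \<subseteq> lex_verts (cycle_verts m) 4" using c1 by blast
  next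
    show "lex_verts (cycle_verts m) 4 \<subseteq> (\<Union>vs\<in>?Cs. set vs)"
    proof
      fix x assume "x \<in> lex_verts (cycle_verts m) 4"
      then obtain i a where x: "x = (i, a)" "i < m" "a < 4"
        unfolding lex_verts_def cycle_verts_def by auto
      define j where "j = a XOR off m f i"
      have j4: "j < 4" unfolding j_def using x(3) off_lt4[OF f] xor_lt4 by blast
      have "lv m f j i = a" unfolding lv_def j_def by (rule xor_cancel)
      then have "x \<in> set (cyc m f j)" unfolding set_cyc using x by auto
      then show "x \<in> (\<Union>vs\<in>?Cs. set vs)" using j4 by auto
    qed
  qed
  have c4: "Fac m f = (\<Union>vs\<in>?Cs. cyc_of_list vs)" unfolding Fac_def by simp
  show ?thesis unfolding is_Ck_factor_def using sub c1 c2 c3 c4 by blast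
qed

theorem mainTheorem3:
  fixes m :: nat
  assumes "m \<ge> 3"
  shows "has_Ck_factorization m (lex_verts (cycle_verts m) 4) (lex_edges (cycle_edges m) 4)"
proof -
  have m0: "0 < m" using assms by simp
  have A: "\<forall>F\<in>Fac m ` {0..<4}. is_Ck_factor m (lex_verts (cycle_verts m) 4) (lex_edges (cycle_edges m) 4) F"
    using factor[OF assms] by force
  have B: "\<forall>F\<in>Fac m ` {0..<4}. \<forall>F'\<in>Fac m ` {0..<4}. F \<noteq> F' \<longrightarrow> F \<inter> F' = {}"
  proof (intro ballI impI)
    fix F F' assume FF: "F \<in> Fac m ` {0..<4}" "F' \<in> Fac m ` {0..<4}" "F \<noteq> F'"
    from FF(1) obtain f where f: "f < 4" "F = Fac m f" by auto
    from FF(2) obtain g where g: "g < 4" "F' = Fac m g" by auto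
    have fg: "f < 4" "g < 4" "F = Fac m f" "F' = Fac m g" using f g by auto
    show "F \<inter> F' = {}"
    proof (rule ccontr)
      assume "F \<inter> F' \<noteq> {}"
      then obtain e where e: "e \<in> Fac m f" "e \<in> Fac m g" unfolding fg by blast
      from e(1) obtain j i where ji: "i < m" "e = edge m f j i"
        unfolding Fac_def cyc_edges[OF m0] by blast
      from e(2) obtain j' k where jk: "k < m" "e = edge m g j' k"
        unfolding Fac_def cyc_edges[OF m0] by blast
      have eq: "edge m f j i = edge m g j' k" using ji(2) jk(2) by simp
      have "f = g" by (rule disj[OF assms ji(1) jk(1) fg(1,2) eq])
      then show False using fg \<open>F \<noteq> F'\<close> by simp
    qed
  qed
  have C: "\<Union>(Fac m ` {0..<4}) = lex_edges (cycle_edges m) 4"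
  proof
    show "\<Union>(Fac m ` {0..<4}) \<subseteq> lex_edges (cycle_edges m) 4"
    proof
      fix x assume "x \<in> \<Union>(Fac m ` {0..<4})"
      then obtain f where f: "f < 4" "x \<in> Fac m f" by auto
      have "Fac m f \<subseteq> lex_edges (cycle_edges m) 4"
        using factor[OF assms f(1)] by (simp add: is_Ck_factor_def)
      then show "x \<in> lex_edges (cycle_edges m) 4" using f(2) by blast
    qed
  next
    show "lex_edges (cycle_edges m) 4 \<subseteq> \<Union>(Fac m ` {0..<4})"
    proof
      fix x assume "x \<in> lex_edges (cycle_edges m) 4"
      then obtain u w a b where x: "x = {(u, a), (w, b)}" "{u, w} \<in> cycle_edges m" "a < 4" "b < 4"
        unfolding lex_edges_def by auto
      then obtain i where i: "i < m" "{u, w} = {i, (i + 1) mod m}"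
        unfolding cycle_edges_def by auto
      have "\<exists>a' b'. a' < 4 \<and> b' < 4 \<and> x = {(i, a'), ((i + 1) mod m, b')}"
      proof (cases "u = i \<and> w = (i + 1) mod m")
        case True
        then show ?thesis using x by blast
      next
        case False
        then have "u = (i + 1) mod m \<and> w = i" using i(2) by (auto simp: doubleton_eq_iff)
        then show ?thesis using x by (metis insert_commute)
      qed
      then obtain a' b' where ab: "a' < 4" "b' < 4" "x = {(i, a'), ((i + 1) mod m, b')}" by blast
      obtain f j where fj: "f < 4" "j < 4" "edge m f j i = x"
        using cover[OF assms i(1) ab(1,2)] ab(3) by metis
      have "x \<in> Fac m f" unfolding Fac_def cyc_edges[OF m0] using fj i(1) by auto
      then show "x \<in> \<Union>(Fac m ` {0..<4})" using fj by auto
    qed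
  qed
  show ?thesis unfolding has_Ck_factorization_def
    by (rule exI[of _ "Fac m ` {0..<4}"]) (intro conjI A B C)
qed

end
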